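(* Let $f_1,\dots,f_P:\mathbb{R}^n\to\mathbb{R}$ be continuously differentiable with Lipschitz continuous gradients, and let $f=\sum_{i=1}^P f_i$. Let $\{\zeta^k\}\subset\mathbb{R}_+$ be a sequence of positive step sizes with $\lim_{k\to\infty}\zeta^k=0$, and let $\{w^k\}\subset\mathbb{R}^n$ be a bounded sequence. For every $k$, let $(\widetilde w^k,d^k,\tilde f^k)=\texttt{Inner\_Cycle}(w^k,\zeta^k)$, with intermediate points $\widetilde w^k_0,\dots,\widetilde w^k_P$. Then for any limit point $\bar w$ of $\{w^k\}$ there exists an infinite index set $K$ such that \[ \lim_{k\to\infty,k\in K} w^k=\bar w,\qquad \lim_{k\to\infty,k\in K}\zeta^k=0,\qquad \lim_{k\to\infty,k\in K}\widetilde w^k_i=\bar w\ \text{ for all } i=1,\dots,P, \] \[ \lim_{k\to\infty,k\in K} d^k=-\nabla f(\bar w),\qquad \lim_{k\to\infty,k\in K}\tilde f^k=f(\bar w). \]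
   Context: The procedure $\texttt{Inner\_Cycle}(w,\zeta)$ (one epoch of the incremental gradient method) is defined as follows: set $\widetilde w_0=w$; for $i=1,\dots,P$ set $\tilde f_i=f_i(\widetilde w_{i-1})$, $\tilde d_i=-\nabla f_i(\widetilde w_{i-1})$, $\widetilde w_i=\widetilde w_{i-1}+\zeta\tilde d_i$. It outputs $\widetilde w=\widetilde w_P$, the direction $d=\sum_{i=1}^P\tilde d_i$, and the function estimate $\tilde f=\sum_{i=1}^P\tilde f_i=\sum_{i=1}^P f_i(\widetilde w_{i-1})$. When applied to $(w^k,\zeta^k)$ the intermediate points are denoted $\widetilde w^k_i$ and the outputs $\widetilde w^k,d^k,\tilde f^k$. *)

theory Defs
  imports "HOL-Analysis.Analysis"
begin

definition grad :: "('a::real_inner \<Rightarrow> real) \<Rightarrow> 'a \<Rightarrow> 'a" where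
  "grad g x = (SOME v. (g has_derivative (\<lambda>h. inner v h)) (at x))"

text \<open>Intermediate points of Inner_Cycle(w, zeta) for components f 1, ..., f P:
  pt 0 = w, pt i = pt (i-1) - zeta * grad (f i) (pt (i-1)).\<close>
fun ic_point :: "(nat \<Rightarrow> 'a::real_inner \<Rightarrow> real) \<Rightarrow> 'a \<Rightarrow> real \<Rightarrow> nat \<Rightarrow> 'a" where
  "ic_point f w \<zeta> 0 = w"
| "ic_point f w \<zeta> (Suc i) = ic_point f w \<zeta> i + \<zeta> *\<^sub>R (- grad (f (Suc i)) (ic_point f w \<zeta> i))"

definition ic_dir :: "(nat \<Rightarrow> 'a::real_inner \<Rightarrow> real) \<Rightarrow> nat \<Rightarrow> 'a \<Rightarrow> real \<Rightarrow> 'a" where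
  "ic_dir f P w \<zeta> = (\<Sum>i=1..P. - grad (f i) (ic_point f w \<zeta> (i - 1)))"

definition ic_fval :: "(nat \<Rightarrow> 'a::real_inner \<Rightarrow> real) \<Rightarrow> nat \<Rightarrow> 'a \<Rightarrow> real \<Rightarrow> real" where
  "ic_fval f P w \<zeta> = (\<Sum>i=1..P. f i (ic_point f w \<zeta> (i - 1)))"

definition limit_point_seq :: "(nat \<Rightarrow> 'a::topological_space) \<Rightarrow> 'a \<Rightarrow> bool" where
  "limit_point_seq x a \<longleftrightarrow> (\<exists>r. strict_mono r \<and> (x \<circ> r) \<longlonglongrightarrow> a)"

end

theory Submission
  imports Defs
begin

lemma lin_repr:
  fixes D :: "'a::euclidean_space \<Rightarrow> real"
  assumes "linear D"
  shows "D = (\<lambda>h. inner (\<Sum>b\<in>Basis. D b *\<^sub>R b) h)"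
proof
  fix h
  have "D h = D (\<Sum>b\<in>Basis. (h \<bullet> b) *\<^sub>R b)" by (simp add: euclidean_representation)
  also have "\<dots> = (\<Sum>b\<in>Basis. (h \<bullet> b) * D b)"
    using assms by (simp add: linear_sum linear_scale)
  also have "\<dots> = inner (\<Sum>b\<in>Basis. D b *\<^sub>R b) h"
    unfolding inner_sum_left inner_scaleR_left by (simp add: inner_commute mult.commute)
  finally show "D h = inner (\<Sum>b\<in>Basis. D b *\<^sub>R b) h" .
qed

lemma grad_has:
  fixes g :: "'a::euclidean_space \<Rightarrow> real"
  assumes "g differentiable (at x)"
  shows "(g has_derivative (\<lambda>h. inner (grad g x) h)) (at x)"
proof -
  obtain D where D: "(g has_derivative D) (at x)" using assms differentiable_def by blast
  then have "linear D" using has_derivative_linear by blast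
  then have "(g has_derivative (\<lambda>h. inner (\<Sum>b\<in>Basis. D b *\<^sub>R b) h)) (at x)"
    using D lin_repr by metis
  then show ?thesis unfolding grad_def by (rule someI)
qed

lemma grad_unique:
  fixes g :: "'a::euclidean_space \<Rightarrow> real"
  assumes "(g has_derivative (\<lambda>h. inner v h)) (at x)"
  shows "grad g x = v"
proof -
  have d: "g differentiable (at x)" using assms differentiable_def by blast
  have "(\<lambda>h. inner (grad g x) h) = (\<lambda>h. inner v h)"
    using has_derivative_unique[OF grad_has[OF d] assms] .
  then have "inner (grad g x) (grad g x - v) = inner v (grad g x - v)" by metis
  then have "inner (grad g x - v) (grad g x - v) = 0" by (simp add: inner_diff_left)
  then show ?thesis by simp
qed

lemma sub_tendsto:
  assumes r: "strict_mono r" and t: "(g \<circ> r) \<longlonglongrightarrow> L"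
  shows "(g \<longlongrightarrow> L) (inf sequentially (principal (range r)))"
proof (rule topological_tendstoI)
  fix S assume "open S" "L \<in> S"
  then obtain N where N: "\<And>n. n \<ge> N \<Longrightarrow> g (r n) \<in> S"
    using t unfolding tendsto_def eventually_sequentially by auto
  have "eventually (\<lambda>k. k \<ge> r N) sequentially" by (rule eventually_ge_at_top)
  then have "eventually (\<lambda>k. k \<ge> r N \<and> k \<in> range r) (inf sequentially (principal (range r)))"
    unfolding eventually_inf_principal by (rule eventually_mono) simp
  then show "eventually (\<lambda>k. g k \<in> S) (inf sequentially (principal (range r)))"
  proof (rule eventually_mono)
    fix k assume "r N \<le> k \<and> k \<in> range r"
    then obtain n where "k = r n" "r N \<le> r n" by auto
    then have "N \<le> n" using r by (simp add: strict_mono_less_eq)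
    then show "g k \<in> S" using N \<open>k = r n\<close> by simp
  qed
qed

theorem proposition1:
  fixes f :: "nat \<Rightarrow> 'a::euclidean_space \<Rightarrow> real"
    and P :: nat
    and \<zeta> :: "nat \<Rightarrow> real"
    and w :: "nat \<Rightarrow> 'a"
    and wbar :: 'a
  assumes diff: "\<And>i x. i \<in> {1..P} \<Longrightarrow> f i differentiable (at x)"
    and cont_grad: "\<And>i. i \<in> {1..P} \<Longrightarrow> continuous_on UNIV (grad (f i))"
    and lip_grad: "\<And>i. i \<in> {1..P} \<Longrightarrow> \<exists>L. L-lipschitz_on UNIV (grad (f i))"
    and step_pos: "\<And>k. \<zeta> k > 0"
    and step_lim: "\<zeta> \<longlonglongrightarrow> 0"
    and bdd: "bounded (range w)"
    and lp: "limit_point_seq w wbar"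
  shows "\<exists>K::nat set. infinite K \<and>
           ((\<lambda>k. w k) \<longlongrightarrow> wbar) (inf sequentially (principal K)) \<and>
           ((\<lambda>k. \<zeta> k) \<longlongrightarrow> 0) (inf sequentially (principal K)) \<and>
           (\<forall>i\<in>{1..P}. ((\<lambda>k. ic_point f (w k) (\<zeta> k) i) \<longlongrightarrow> wbar) (inf sequentially (principal K))) \<and>
           ((\<lambda>k. ic_dir f P (w k) (\<zeta> k)) \<longlongrightarrow> - grad (\<lambda>x. \<Sum>i=1..P. f i x) wbar) (inf sequentially (principal K)) \<and>
           ((\<lambda>k. ic_fval f P (w k) (\<zeta> k)) \<longlongrightarrow> (\<Sum>i=1..P. f i wbar)) (inf sequentially (principal K))"
proof -
  obtain r where r: "strict_mono r" and wr: "(w \<circ> r) \<longlonglongrightarrow> wbar"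
    using lp unfolding limit_point_seq_def by blast
  have zr: "(\<zeta> \<circ> r) \<longlonglongrightarrow> 0" using LIMSEQ_subseq_LIMSEQ[OF step_lim r] .
  have gc: "\<And>i (y::'a) (g::nat\<Rightarrow>'a). i \<in> {1..P} \<Longrightarrow> g \<longlonglongrightarrow> y \<Longrightarrow> (\<lambda>n. grad (f i) (g n)) \<longlonglongrightarrow> grad (f i) y"
  proof -
    fix i and y::'a and g::"nat\<Rightarrow>'a" assume i: "i \<in> {1..P}" and g: "g \<longlonglongrightarrow> y"
    have "isCont (grad (f i)) y" using cont_grad[OF i] by (simp add: continuous_on_eq_continuous_at)
    then show "(\<lambda>n. grad (f i) (g n)) \<longlonglongrightarrow> grad (f i) y" using g by (rule isCont_tendsto_compose)
  qed
  have pts: "i \<le> P \<Longrightarrow> (\<lambda>n. ic_point f (w (r n)) (\<zeta> (r n)) i) \<longlonglongrightarrow> wbar" for i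
  proof (induction i)
    case 0
    then show ?case using wr by (simp add: o_def)
  next
    case (Suc i)
    then have IH: "(\<lambda>n. ic_point f (w (r n)) (\<zeta> (r n)) i) \<longlonglongrightarrow> wbar" by simp
    have "(\<lambda>n. grad (f (Suc i)) (ic_point f (w (r n)) (\<zeta> (r n)) i)) \<longlonglongrightarrow> grad (f (Suc i)) wbar"
      using gc[OF _ IH] Suc.prems by simp
    then have "(\<lambda>n. \<zeta> (r n) *\<^sub>R (- grad (f (Suc i)) (ic_point f (w (r n)) (\<zeta> (r n)) i))) \<longlonglongrightarrow> 0 *\<^sub>R (- grad (f (Suc i)) wbar)"
      using zr by (intro tendsto_scaleR tendsto_minus) (auto simp: o_def)
    then show ?case using tendsto_add[OF IH] by fastforce
  qed
  have gsum: "grad (\<lambda>x. \<Sum>i=1..P. f i x) wbar = (\<Sum>i=1..P. grad (f i) wbar)"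
  proof (rule grad_unique)
    have "((\<lambda>x. \<Sum>i=1..P. f i x) has_derivative (\<lambda>h. \<Sum>i=1..P. inner (grad (f i) wbar) h)) (at wbar)"
      by (intro has_derivative_sum grad_has diff) 
    then show "((\<lambda>x. \<Sum>i=1..P. f i x) has_derivative (\<lambda>h. inner (\<Sum>i=1..P. grad (f i) wbar) h)) (at wbar)"
      by (simp add: inner_sum_left)
  qed
  have dirl: "((\<lambda>k. ic_dir f P (w k) (\<zeta> k)) \<circ> r) \<longlonglongrightarrow> - grad (\<lambda>x. \<Sum>i=1..P. f i x) wbar"
    unfolding gsum ic_dir_def o_def sum_negf[symmetric]
    by (intro tendsto_sum tendsto_minus gc pts) auto
  have fc: "\<And>i (y::'a) (g::nat\<Rightarrow>'a). i \<in> {1..P} \<Longrightarrow> g \<longlonglongrightarrow> y \<Longrightarrow> (\<lambda>n. f i (g n)) \<longlonglongrightarrow> f i y"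
  proof -
    fix i and y::'a and g::"nat\<Rightarrow>'a" assume i: "i \<in> {1..P}" and g: "g \<longlonglongrightarrow> y"
    have "isCont (f i) y" using diff[OF i] by (rule differentiable_imp_continuous_within)
    then show "(\<lambda>n. f i (g n)) \<longlonglongrightarrow> f i y" using g by (rule isCont_tendsto_compose)
  qed
  have fl: "((\<lambda>k. ic_fval f P (w k) (\<zeta> k)) \<circ> r) \<longlonglongrightarrow> (\<Sum>i=1..P. f i wbar)"
    unfolding ic_fval_def o_def
    by (intro tendsto_sum fc pts) auto
  have ptl: "\<forall>i\<in>{1..P}. ((\<lambda>k. ic_point f (w k) (\<zeta> k) i) \<longlongrightarrow> wbar) (inf sequentially (principal (range r)))"
    using pts by (auto intro!: sub_tendsto[OF r] simp: o_def)
  have "infinite (range r)" using r strict_mono_imp_inj_on finite_imageD by blast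
  then show ?thesis
    using sub_tendsto[OF r wr] sub_tendsto[OF r zr] ptl sub_tendsto[OF r dirl] sub_tendsto[OF r fl]
    by (intro exI[of _ "range r"]) (simp add: o_def)
qed

end
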